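(* Consider the lasso problem $\min_{\boldsymbol\beta\in\mathbb{R}^p}\frac{1}{2n}\|\mathbf{y}-\mathbf{X}\boldsymbol\beta\|^2+\lambda\|\boldsymbol\beta\|_1$ at a given $\lambda$, and suppose it is strictly convex, so that the sequence of iterates produced by an iterative algorithm $a(\cdot)$ (such as coordinate descent) converges to the unique global optimum $\widehat{\boldsymbol\beta}(\lambda)$. Then the algorithm $a(\cdot)$ combined with hybrid safe-strong rule (HSSR) screening converges to the same solution $\widehat{\boldsymbol\beta}(\lambda)$.
   Context: Here $\mathbf{y}\in\mathbb{R}^n$, $\mathbf{X}=(\mathbf{x}_1,\ldots,\mathbf{x}_p)\in\mathbb{R}^{n\times p}$, $\|\cdot\|$ is the Euclidean norm and $\|\cdot\|_1$ the $\ell_1$ norm. The lasso is solved over a decreasing sequence $\lambda_1>\lambda_2>\cdots>\lambda_K$, and $\widehat{\boldsymbol\beta}(\lambda_k)$ is the solution at $\lambda_k$, with residual $\mathbf{r}(\lambda_k)=\mathbf{y}-\mathbf{X}\widehat{\boldsymbol\beta}(\lambda_k)$. A safe rule is a screening rule that only discards features $j$ for which $\widehat{\beta}_j(\lambda_{k+1})=0$ is guaranteed; let $\mathcal{S}_{k+1}$ (the safe set) be the set of features not discarded by the safe rule at $\lambda_{k+1}$. The hybrid safe-strong rule (HSSR) discards feature $j$ at $\lambda_{k+1}$ if $j\in\mathcal{S}_{k+1}^c\cup\{j\in\mathcal{S}_{k+1}:|\mathbf{x}_j^T\mathbf{r}(\lambda_k)|/n<2\lambda_{k+1}-\lambda_k\}$.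 Running an algorithm with HSSR screening means: the algorithm is run only over the features not discarded by HSSR; after convergence, the KKT conditions of the lasso ($\mathbf{x}_j^T\mathbf{r}(\lambda)/n=\lambda\,\mathrm{sign}(\widehat\beta_j)$ if $\widehat\beta_j\neq0$, $|\mathbf{x}_j^T\mathbf{r}(\lambda)/n|\le\lambda$ if $\widehat\beta_j=0$) are checked for the features in the safe set that were discarded by the strong-rule part; any violating features are added back and the algorithm is rerun (warm-started), repeating until no violations occur. *)

theory Defs
  imports "HOL-Analysis.Analysis"
begin

text \<open>Design matrix X has n rows (observations, index type 'n) and p columns
  (features, index type 'p); y :: real^'n; beta :: real^'p.  n = CARD('n).\<close>

definition strict_convex_on :: "'a::real_vector set \<Rightarrow> ('a \<Rightarrow> real) \<Rightarrow> bool" where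
  "strict_convex_on S f \<longleftrightarrow>
     (\<forall>x\<in>S. \<forall>y\<in>S. x \<noteq> y \<longrightarrow> (\<forall>u>0. \<forall>v>0. u + v = 1 \<longrightarrow>
        f (u *\<^sub>R x + v *\<^sub>R y) < u * f x + v * f y))"

definition l1norm :: "real^'p \<Rightarrow> real" where
  "l1norm b = (\<Sum>j\<in>UNIV. \<bar>b $ j\<bar>)"

definition lasso_obj :: "real^'p^'n \<Rightarrow> real^'n \<Rightarrow> real \<Rightarrow> real^'p \<Rightarrow> real" where
  "lasso_obj X y lam b =
     (1 / (2 * real CARD('n))) * (norm (y - X *v b))^2 + lam * l1norm b"

definition restricted_lasso_min :: "real^'p^'n \<Rightarrow> real^'n \<Rightarrow> real \<Rightarrow> 'p set \<Rightarrow> real^'p \<Rightarrow> bool" where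
  "restricted_lasso_min X y lam A b \<longleftrightarrow>
     (\<forall>j. j \<notin> A \<longrightarrow> b $ j = 0) \<and>
     (\<forall>c. (\<forall>j. j \<notin> A \<longrightarrow> c $ j = 0) \<longrightarrow> lasso_obj X y lam b \<le> lasso_obj X y lam c)"

definition lasso_min :: "real^'p^'n \<Rightarrow> real^'n \<Rightarrow> real \<Rightarrow> real^'p \<Rightarrow> bool" where
  "lasso_min X y lam b \<longleftrightarrow> (\<forall>c. lasso_obj X y lam b \<le> lasso_obj X y lam c)"

definition residual :: "real^'p^'n \<Rightarrow> real^'n \<Rightarrow> real^'p \<Rightarrow> real^'n" where
  "residual X y b = y - X *v b"

definition corr :: "real^'p^'n \<Rightarrow> real^'n \<Rightarrow> 'p \<Rightarrow> real" where
  "corr X r j = (column j X \<bullet> r) / real CARD('n)"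

definition kkt_ok :: "real^'p^'n \<Rightarrow> real^'n \<Rightarrow> real \<Rightarrow> real^'p \<Rightarrow> 'p \<Rightarrow> bool" where
  "kkt_ok X y lam b j \<longleftrightarrow>
     (if b $ j \<noteq> 0 then corr X (residual X y b) j = lam * sgn (b $ j)
      else \<bar>corr X (residual X y b) j\<bar> \<le> lam)"

definition safe_set :: "real^'p^'n \<Rightarrow> real^'n \<Rightarrow> real \<Rightarrow> 'p set \<Rightarrow> bool" where
  "safe_set X y lam S \<longleftrightarrow> (\<forall>b. lasso_min X y lam b \<longrightarrow> (\<forall>j. j \<notin> S \<longrightarrow> b $ j = 0))"

text \<open>Features kept by HSSR at lam (= lambda_{k+1}), given the safe set S, the previous
  value lam_prev (= lambda_k) and the previous solution b_prev.\<close>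
definition hssr_kept :: "real^'p^'n \<Rightarrow> real^'n \<Rightarrow> real \<Rightarrow> real \<Rightarrow> real^'p \<Rightarrow> 'p set \<Rightarrow> 'p set" where
  "hssr_kept X y lam lam_prev b_prev S =
     {j \<in> S. \<not> (\<bar>corr X (residual X y b_prev) j\<bar> < 2 * lam - lam_prev)}"

definition kkt_violators :: "real^'p^'n \<Rightarrow> real^'n \<Rightarrow> real \<Rightarrow> 'p set \<Rightarrow> 'p set \<Rightarrow> real^'p \<Rightarrow> 'p set" where
  "kkt_violators X y lam S A b = {j \<in> S - A. \<not> kkt_ok X y lam b j}"

text \<open>The algorithm a A w: iterates of the algorithm run only over the features in A,
  warm-started at w.  State m of HSSR-screened algorithm: (active set, converged value).\<close>
fun hssr_state ::
  "('p set \<Rightarrow> real^'p \<Rightarrow> nat \<Rightarrow> real^'p) \<Rightarrow> real^'p^'n \<Rightarrow> real^'n \<Rightarrow> real \<Rightarrow> 'p set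
     \<Rightarrow> 'p set \<Rightarrow> real^'p \<Rightarrow> nat \<Rightarrow> 'p set \<times> (real^'p)" where
  "hssr_state a X y lam S A0 w0 0 = (A0, lim (a A0 w0))"
| "hssr_state a X y lam S A0 w0 (Suc m) =
     (let (A, b) = hssr_state a X y lam S A0 w0 m;
          A' = A \<union> kkt_violators X y lam S A b
      in (A', lim (a A' b)))"

end

theory Submission
  imports Defs
begin

lemma mv_inner:
  fixes X :: "real^'p^'n"
  shows "(X *v d) \<bullet> r = (\<Sum>j\<in>UNIV. d $ j * (column j X \<bullet> r))"
proof -
  have "(X *v d) \<bullet> r = (\<Sum>i\<in>UNIV. \<Sum>j\<in>UNIV. X$i$j * d$j * r$i)"
    by (simp add: inner_vec_def matrix_vector_mult_def sum_distrib_right)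
  also have "\<dots> = (\<Sum>j\<in>UNIV. \<Sum>i\<in>UNIV. X$i$j * d$j * r$i)" by (rule sum.swap)
  also have "\<dots> = (\<Sum>j\<in>UNIV. d $ j * (column j X \<bullet> r))"
    by (simp add: inner_vec_def column_def sum_distrib_left mult_ac)
  finally show ?thesis .
qed

lemma obj_expand:
  fixes X :: "real^'p^'n"
  shows "lasso_obj X y lam c = lasso_obj X y lam b
    + (\<Sum>j\<in>UNIV. lam * (\<bar>c$j\<bar> - \<bar>b$j\<bar>) - corr X (residual X y b) j * (c$j - b$j))
    + (norm (X *v (c - b)))^2 / (2 * real CARD('n))"
proof -
  define r where "r = y - X *v b"
  define d where "d = c - b"
  have e1: "y - X *v c = r - X *v d" unfolding r_def d_def by (simp add: algebra_simps)
  have e2: "(norm (r - X *v d))^2 = (norm r)^2 - 2 * ((X *v d) \<bullet> r) + (norm (X *v d))^2"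
    by (simp add: power2_norm_eq_inner inner_diff inner_commute)
  have e3: "(\<Sum>j\<in>UNIV. lam * (\<bar>c$j\<bar> - \<bar>b$j\<bar>) - corr X r j * (c$j - b$j))
     = lam * l1norm c - lam * l1norm b - ((X *v d) \<bullet> r) / real CARD('n)"
    unfolding l1norm_def corr_def mv_inner d_def
    apply (simp add: sum_subtractf sum_distrib_left sum_divide_distrib right_diff_distrib mult_ac)
    by (simp add: diff_divide_distrib sum_subtractf sum_divide_distrib)
  have n0: "real CARD('n) > 0" by simp
  have rr: "residual X y b = r" by (simp add: residual_def r_def)
    show ?thesis
    unfolding lasso_obj_def rr e1 d_def[symmetric] e2 e3
    using n0 by (simp add: field_simps r_def)
qed

lemma obj_cont: "continuous_on UNIV (lasso_obj X y lam)"
  unfolding lasso_obj_def l1norm_def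
  by (intro continuous_intros linear_continuous_on matrix_vector_mul_bounded_linear)


lemma small_contra:
  fixes d s K :: real
  assumes "K \<ge> 0" "d > 0" "s > 0" "s \<le> d / (K + 1)" "d * s \<le> K * s^2"
  shows False
proof -
  have "d \<le> K * s" using assms(3,5) by (simp add: power2_eq_square mult_ac)
  also have "K * s \<le> K * (d / (K+1))" by (rule mult_left_mono) (use assms(1,4) in auto)
  also have "\<dots> < d" using assms(1,2) by (simp add: field_simps)
  finally show False by simp
qed

lemma scalar_kkt:
  fixes K lam c \<beta> :: real
  assumes K: "K \<ge> 0" and lam: "lam > 0"
    and H: "\<And>t. c * t \<le> K * t^2 + lam * (\<bar>\<beta> + t\<bar> - \<bar>\<beta>\<bar>)"
  shows "(\<beta> \<noteq> 0 \<longrightarrow> c = lam * sgn \<beta>) \<and> (\<beta> = 0 \<longrightarrow> \<bar>c\<bar> \<le> lam)"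
proof -
  have up: "c \<le> lam"
  proof (rule ccontr)
    assume "\<not> c \<le> lam"
    define t where "t = (c - lam) / (K + 1)"
    have t0: "t > 0" using \<open>\<not> c \<le> lam\<close> K by (simp add: t_def)
    have "\<bar>\<beta> + t\<bar> - \<bar>\<beta>\<bar> \<le> t" using t0 by linarith
    hence "c * t \<le> K * t^2 + lam * t" using H[of t] lam by (smt (verit) mult_left_mono)
    hence "(c - lam) * t \<le> K * t^2" by (simp add: algebra_simps)
    thus False using small_contra[OF K _ t0, of "c - lam"] \<open>\<not> c \<le> lam\<close> by (simp add: t_def)
  qed
  have lo: "- lam \<le> c"
  proof (rule ccontr)
    assume "\<not> - lam \<le> c"
    define s where "s = (- c - lam) / (K + 1)"
    have s0: "s > 0" using \<open>\<not> - lam \<le> c\<close> K by (simp add: s_def)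
    have "\<bar>\<beta> + (-s)\<bar> - \<bar>\<beta>\<bar> \<le> s" using s0 by linarith
    hence "c * (-s) \<le> K * s^2 + lam * s" using H[of "-s"] lam by (smt (verit) mult_left_mono power2_minus)
    hence "(- c - lam) * s \<le> K * s^2" by (simp add: algebra_simps)
    thus False using small_contra[OF K _ s0, of "- c - lam"] \<open>\<not> - lam \<le> c\<close> by (simp add: s_def)
  qed
  have pos: "c = lam" if b0: "\<beta> > 0"
  proof (rule ccontr)
    assume "c \<noteq> lam"
    hence cl: "c < lam" using up by simp
    define s where "s = min \<beta> ((lam - c) / (K + 1))"
    have s0: "s > 0" using cl K b0 by (simp add: s_def)
    have "\<bar>\<beta> + (-s)\<bar> - \<bar>\<beta>\<bar> = - s" using s0 b0 by (simp add: s_def)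
    hence "c * (-s) \<le> K * s^2 - lam * s" using H[of "-s"] by simp
    hence "(lam - c) * s \<le> K * s^2" by (simp add: algebra_simps)
    thus False using small_contra[OF K _ s0, of "lam - c"] cl by (simp add: s_def)
  qed
  have neg: "c = - lam" if b0: "\<beta> < 0"
  proof (rule ccontr)
    assume "c \<noteq> - lam"
    hence cl: "- lam < c" using lo by simp
    define s where "s = min (- \<beta>) ((c + lam) / (K + 1))"
    have s0: "s > 0" using cl K b0 by (simp add: s_def)
    have "\<bar>\<beta> + s\<bar> - \<bar>\<beta>\<bar> = - s" using s0 b0 by (simp add: s_def)
    hence "c * s \<le> K * s^2 - lam * s" using H[of "s"] by simp
    hence "(c + lam) * s \<le> K * s^2" by (simp add: algebra_simps)
    thus False using small_contra[OF K _ s0, of "c + lam"] cl by (simp add: s_def)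
  qed
  show ?thesis using up lo pos neg by (cases "\<beta> > 0"; cases "\<beta> < 0") (auto simp: sgn_if)
qed

lemma kkt_necessary:
  fixes X :: "real^'p^'n"
  assumes lam: "lam > 0" and rm: "restricted_lasso_min X y lam A b" and jA: "j \<in> A"
  shows "kkt_ok X y lam b j"
proof -
  define K where "K = (norm (column j X))^2 / (2 * real CARD('n))"
  define cr where "cr = corr X (residual X y b) j"
  have K0: "K \<ge> 0" unfolding K_def by simp
  have H: "cr * t \<le> K * t^2 + lam * (\<bar>b$j + t\<bar> - \<bar>b$j\<bar>)" for t
  proof -
    define c where "c = b + t *\<^sub>R axis j 1"
    have cd: "c - b = t *\<^sub>R axis j 1" by (simp add: c_def)
    have supp: "\<forall>i. i \<notin> A \<longrightarrow> c $ i = 0" using rm jA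
      unfolding restricted_lasso_min_def c_def by (auto simp: axis_def)
    have le: "lasso_obj X y lam b \<le> lasso_obj X y lam c"
      using rm supp unfolding restricted_lasso_min_def by blast
    have sm: "(\<Sum>i\<in>UNIV. lam * (\<bar>c$i\<bar> - \<bar>b$i\<bar>) - corr X (residual X y b) i * (c$i - b$i))
       = lam * (\<bar>b$j + t\<bar> - \<bar>b$j\<bar>) - cr * t"
    proof -
      have "(\<Sum>i\<in>UNIV. lam * (\<bar>c$i\<bar> - \<bar>b$i\<bar>) - corr X (residual X y b) i * (c$i - b$i))
        = (\<Sum>i\<in>UNIV. if i = j then lam * (\<bar>b$j + t\<bar> - \<bar>b$j\<bar>) - cr * t else 0)"
        by (rule sum.cong) (auto simp: c_def axis_def cr_def)
      thus ?thesis by simp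
    qed
    have nm: "(norm (X *v (c - b)))^2 / (2 * real CARD('n)) = K * t^2"
      unfolding cd matrix_vector_mult_scaleR matrix_vector_mult_basis K_def
      by (simp add: power_mult_distrib)
    show ?thesis using le obj_expand[of X y lam c b] sm nm by simp
  qed
  from scalar_kkt[OF K0 lam H] show ?thesis
    unfolding kkt_ok_def cr_def by auto
qed

lemma kkt_term:
  fixes lam cr \<beta> x :: real
  assumes lam: "lam > 0"
    and k: "(if \<beta> \<noteq> 0 then cr = lam * sgn \<beta> else \<bar>cr\<bar> \<le> lam)"
  shows "0 \<le> lam * (\<bar>x\<bar> - \<bar>\<beta>\<bar>) - cr * (x - \<beta>)"
proof (cases "\<beta> = 0")
  case True
  hence "\<bar>cr\<bar> \<le> lam" using k by simp
  hence "cr * x \<le> lam * \<bar>x\<bar>"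
    by (metis abs_ge_self abs_mult abs_ge_zero mult_right_mono order_trans)
  thus ?thesis using True by (simp add: algebra_simps)
next
  case False
  hence cr: "cr = lam * sgn \<beta>" using k by simp
  show ?thesis
  proof (cases "\<beta> > 0")
    case True
    then show ?thesis using cr lam abs_ge_self[of x]
      by (simp add: algebra_simps)
  next
    case f2: False
    hence "\<beta> < 0" using False by simp
    have "0 \<le> lam * (x + \<bar>x\<bar>)" using lam by (intro mult_nonneg_nonneg) auto
    then show ?thesis using cr \<open>\<beta> < 0\<close>
      by (simp add: algebra_simps)
  qed
qed

lemma kkt_sufficient:
  fixes X :: "real^'p^'n"
  assumes lam: "lam > 0" and supp: "\<forall>j. j \<notin> S \<longrightarrow> b $ j = 0"
    and kkt: "\<forall>j\<in>S. kkt_ok X y lam b j"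
  shows "restricted_lasso_min X y lam S b"
  unfolding restricted_lasso_min_def
proof (intro conjI allI impI)
  fix j assume "j \<notin> S" thus "b $ j = 0" using supp by simp
next
  fix c :: "real^'p" assume cs: "\<forall>j. j \<notin> S \<longrightarrow> c $ j = 0"
  have "0 \<le> (\<Sum>j\<in>UNIV. lam * (\<bar>c$j\<bar> - \<bar>b$j\<bar>) - corr X (residual X y b) j * (c$j - b$j))"
  proof (rule sum_nonneg)
    fix j :: 'p
    show "0 \<le> lam * (\<bar>c$j\<bar> - \<bar>b$j\<bar>) - corr X (residual X y b) j * (c$j - b$j)"
    proof (cases "j \<in> S")
      case True
      thus ?thesis using kkt_term[OF lam, of "b$j" "corr X (residual X y b) j" "c$j"] kkt
        unfolding kkt_ok_def by blast
    next
      case False thus ?thesis using cs supp by simp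
    qed
  qed
  moreover have "0 \<le> (norm (X *v (c - b)))^2 / (2 * real CARD('n))" by simp
  ultimately show "lasso_obj X y lam b \<le> lasso_obj X y lam c"
    using obj_expand[of X y lam c b] by linarith
qed

lemma obj_ge_l1:
  fixes X :: "real^'p^'n"
  assumes "lam > 0"
  shows "lam * l1norm c \<le> lasso_obj X y lam c"
  unfolding lasso_obj_def by simp

lemma restricted_exists:
  fixes X :: "real^'p^'n"
  assumes lam: "lam > 0"
  shows "\<exists>b. restricted_lasso_min X y lam A b"
proof -
  define f where "f = lasso_obj X y lam"
  define K where "K = (\<Inter>j\<in>-A. {c::real^'p. c $ j = 0}) \<inter> {c. f c \<le> f 0}"
  have cf: "continuous_on UNIV f" unfolding f_def by (rule obj_cont)
  have closedK: "closed K" unfolding K_def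
    by (intro closed_Int closed_INT ballI closed_Collect_eq closed_Collect_le cf continuous_intros)
  have "bounded K" unfolding bounded_iff
  proof (intro exI ballI)
    fix c assume "c \<in> K"
    hence "f c \<le> f 0" by (simp add: K_def)
    moreover have "lam * l1norm c \<le> f c" unfolding f_def by (rule obj_ge_l1[OF lam])
    ultimately have "l1norm c \<le> f 0 / lam" using lam by (simp add: field_simps)
    thus "norm c \<le> f 0 / lam" using norm_le_l1_cart[of c] unfolding l1norm_def by linarith
  qed
  hence "compact K" using closedK by (simp add: compact_eq_bounded_closed)
  moreover have "0 \<in> K" by (simp add: K_def)
  ultimately obtain b where bK: "b \<in> K" and bmin: "\<forall>c\<in>K. f b \<le> f c"
    using continuous_attains_inf[of K f] continuous_on_subset[OF cf] by blast
  have "restricted_lasso_min X y lam A b"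
    unfolding restricted_lasso_min_def
  proof (intro conjI allI impI)
    fix j assume "j \<notin> A" thus "b $ j = 0" using bK by (auto simp: K_def)
  next
    fix c :: "real^'p" assume cs: "\<forall>j. j \<notin> A \<longrightarrow> c $ j = 0"
    show "lasso_obj X y lam b \<le> lasso_obj X y lam c"
    proof (cases "f c \<le> f 0")
      case True
      hence "c \<in> K" using cs by (auto simp: K_def)
      thus ?thesis using bmin by (simp add: f_def)
    next
      case False
      moreover have "f b \<le> f 0" using bK by (simp add: K_def)
      ultimately show ?thesis by (simp add: f_def)
    qed
  qed
  thus ?thesis by blast
qed

lemma restricted_unique:
  fixes X :: "real^'p^'n"
  assumes strict: "strict_convex_on UNIV (lasso_obj X y lam)"
    and r1: "restricted_lasso_min X y lam A b1" and r2: "restricted_lasso_min X y lam A b2"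
  shows "b1 = b2"
proof (rule ccontr)
  assume ne: "b1 \<noteq> b2"
  define m where "m = (1/2::real) *\<^sub>R b1 + (1/2::real) *\<^sub>R b2"
  have ms: "\<forall>j. j \<notin> A \<longrightarrow> m $ j = 0" using r1 r2 unfolding restricted_lasso_min_def m_def by simp
  have e: "lasso_obj X y lam b1 = lasso_obj X y lam b2"
    using r1 r2 unfolding restricted_lasso_min_def by (meson order_antisym)
  have "\<forall>u>0. \<forall>v>0. u + v = 1 \<longrightarrow>
        lasso_obj X y lam (u *\<^sub>R b1 + v *\<^sub>R b2) < u * lasso_obj X y lam b1 + v * lasso_obj X y lam b2"
    using strict ne unfolding strict_convex_on_def by blast
  from this[rule_format, of "1/2" "1/2"]
  have "lasso_obj X y lam m < (1/2) * lasso_obj X y lam b1 + (1/2) * lasso_obj X y lam b2"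
    unfolding m_def by simp
  moreover have "lasso_obj X y lam b1 \<le> lasso_obj X y lam m"
    using r1 ms unfolding restricted_lasso_min_def by blast
  ultimately show False using e by simp
qed


lemma st_Suc:
  "hssr_state a X y lam S A0 w0 (Suc m) =
    (fst (hssr_state a X y lam S A0 w0 m) \<union>
       kkt_violators X y lam S (fst (hssr_state a X y lam S A0 w0 m)) (snd (hssr_state a X y lam S A0 w0 m)),
     lim (a (fst (hssr_state a X y lam S A0 w0 m) \<union>
       kkt_violators X y lam S (fst (hssr_state a X y lam S A0 w0 m)) (snd (hssr_state a X y lam S A0 w0 m)))
       (snd (hssr_state a X y lam S A0 w0 m))))"
  by (simp add: Let_def split_beta)

theorem theorem3p1:
  fixes X :: "real^'p^'n" and y :: "real^'n"
    and lam lam_prev :: real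
    and b_prev bhat :: "real^'p"
    and S :: "'p set"
    and a :: "'p set \<Rightarrow> real^'p \<Rightarrow> nat \<Rightarrow> real^'p"
  assumes lam_pos: "0 < lam" and lam_lt: "lam < lam_prev"
    and strict: "strict_convex_on UNIV (lasso_obj X y lam)"
    and prev: "lasso_min X y lam_prev b_prev"
    and bhat: "lasso_min X y lam bhat"
    and safe: "safe_set X y lam S"
    and alg_conv: "\<And>A w b. restricted_lasso_min X y lam A b \<Longrightarrow> a A w \<longlonglongrightarrow> b"
  shows "\<exists>m. (\<forall>m'<m. kkt_violators X y lam S (fst (hssr_state a X y lam S (hssr_kept X y lam lam_prev b_prev S) b_prev m'))
                                        (snd (hssr_state a X y lam S (hssr_kept X y lam lam_prev b_prev S) b_prev m')) \<noteq> {})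
           \<and> kkt_violators X y lam S (fst (hssr_state a X y lam S (hssr_kept X y lam lam_prev b_prev S) b_prev m))
                                        (snd (hssr_state a X y lam S (hssr_kept X y lam lam_prev b_prev S) b_prev m)) = {}
           \<and> snd (hssr_state a X y lam S (hssr_kept X y lam lam_prev b_prev S) b_prev m) = bhat"
proof -
  define A0 where "A0 = hssr_kept X y lam lam_prev b_prev S"
  define st where "st = hssr_state a X y lam S A0 b_prev"
  define V where "V = (\<lambda>m. kkt_violators X y lam S (fst (st m)) (snd (st m)))"
  have rm_lim: "restricted_lasso_min X y lam A (lim (a A w))" for A w
  proof -
    obtain b where b: "restricted_lasso_min X y lam A b" using restricted_exists[OF lam_pos] by blast
    hence "a A w \<longlonglongrightarrow> b" by (rule alg_conv)
    hence "lim (a A w) = b" by (rule limI)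
    thus ?thesis using b by simp
  qed
  have inv: "fst (st m) \<subseteq> S \<and> restricted_lasso_min X y lam (fst (st m)) (snd (st m))" for m
  proof (induction m)
    case 0
    show ?case unfolding st_def using rm_lim by (auto simp: A0_def hssr_kept_def)
  next
    case (Suc m)
    show ?case unfolding st_def st_Suc using Suc rm_lim
      by (auto simp: st_def kkt_violators_def)
  qed
  have grow: "(\<forall>m'<m. V m' \<noteq> {}) \<Longrightarrow> m \<le> card (fst (st m))" for m
  proof (induction m)
    case 0 show ?case by simp
  next
    case (Suc m)
    hence IH: "m \<le> card (fst (st m))" and ne: "V m \<noteq> {}" by auto
    have disj: "fst (st m) \<inter> V m = {}" by (auto simp: V_def kkt_violators_def)
    have eq: "fst (st (Suc m)) = fst (st m) \<union> V m" unfolding st_def V_def st_Suc by simp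
    have "card (fst (st (Suc m))) = card (fst (st m)) + card (V m)"
      unfolding eq by (rule card_Un_disjoint) (use disj in auto)
    moreover have "card (V m) \<ge> 1" using ne by (simp add: Suc_le_eq card_gt_0_iff)
    ultimately show ?case using IH by simp
  qed
  have "\<exists>m. V m = {}"
  proof (rule ccontr)
    assume "\<nexists>m. V m = {}"
    hence "Suc (CARD('p)) \<le> card (fst (st (Suc (CARD('p)))))" using grow by blast
    moreover have "card (fst (st (Suc (CARD('p))))) \<le> CARD('p)" by (rule card_mono) auto
    ultimately show False by simp
  qed
  then obtain m where vm: "V m = {}" and lt: "\<forall>m'<m. V m' \<noteq> {}"
    using exists_least_iff[of "\<lambda>m. V m = {}"] by blast
  have sub: "fst (st m) \<subseteq> S" and rmA: "restricted_lasso_min X y lam (fst (st m)) (snd (st m))"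
    using inv[of m] by auto
  have kktS: "\<forall>j\<in>S. kkt_ok X y lam (snd (st m)) j"
  proof
    fix j assume jS: "j \<in> S"
    show "kkt_ok X y lam (snd (st m)) j"
    proof (cases "j \<in> fst (st m)")
      case True thus ?thesis using kkt_necessary[OF lam_pos rmA] by blast
    next
      case False thus ?thesis using vm jS by (auto simp: V_def kkt_violators_def)
    qed
  qed
  have suppS: "\<forall>j. j \<notin> S \<longrightarrow> snd (st m) $ j = 0"
    using rmA sub unfolding restricted_lasso_min_def by blast
  have r1: "restricted_lasso_min X y lam S (snd (st m))"
    by (rule kkt_sufficient[OF lam_pos suppS kktS])
  have r2: "restricted_lasso_min X y lam S bhat"
    using safe bhat unfolding safe_set_def restricted_lasso_min_def lasso_min_def by blast
  have "snd (st m) = bhat" by (rule restricted_unique[OF strict r1 r2])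
  thus ?thesis using vm lt unfolding V_def st_def A0_def by blast
qed

end
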